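(* Consider a finite-space SSP game (as in the context) satisfying the Finite-Space SSP Game Model Assumption, the Q-learning iterates $\{Q_t\}$, and the sequence $\{\hat Q_t\}$ defined in the context from an essentially proper policy $\bar\nu\in\Pi_{2,SR}$ of player II. If $\{\hat Q_t\}$ is bounded below with probability 1, then so is $\{Q_t\}$.
   Context: Finite-space game: $S=\{1,\dots,n\}$, $S_o=S\cup\{0\}$, $0$ absorbing cost-free termination state. At $i\in S$ players I and II have finite control sets $U(i),V(i)$; under $(u,v)$ the state moves to $j\in S_o$ w.p. $p_{ij}(u,v)$ with transition cost $\hat g(i,u,v,j)$ paid by player I to player II. $J(i;\pi_1,\pi_2)=\liminf_{t\to\infty}E_{\pi_1\pi_2}[\sum_{k=0}^t\hat g(i_k,u_k,v_k,i_{k+1})\mid i_0=i]$. $\bar U(i)=\mathcal P(U(i))$, $\bar V(i)=\mathcal P(V(i))$; $\Pi_{1,SR},\Pi_{2,SR}$ stationary randomized policies. Prolonging pair: for some initial state the termination state is with positive probability never reached. $\nu\in\Pi_{2,SR}$ is essentially proper if some $\mu\in\Pi_{1,SR}$ makes $(\mu,\nu)$ non-prolonging and every $\mu\in\Pi_{1,SR}$ with $(\mu,\nu)$ prolonging has $J(i;\mu,\nu)=+\infty$ for some $i$. Finite-Space SSP Game Model Assumption: (i) there is $\bar\mu\in\Pi_{1,SR}$ with $J(i;\bar\mu,\nu)<+\infty$ for all $\nu\in\Pi_{2,SR}$, all $i$; (ii) there is $\bar\nu\in\Pi_{2,SR}$ with $J(i;\mu,\bar\nu)>-\infty$ for all $\mu$,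 all $i$; (iii) every prolonging pair in $\Pi_{1,SR}\times\Pi_{2,SR}$ has $J(i;\mu,\nu)\in\{\pm\infty\}$ for some $i$. Under this assumption an essentially proper $\bar\nu\in\Pi_{2,SR}$ exists; fix one and write $\bar\nu_s=\bar\nu(\cdot\mid s)$ (with $\bar\nu_0$ the point mass at $0$). Q-learning: $R=\{(i,u,v)\}$, $U(0)=V(0)=\{0\}$, vectors indexed by $R\cup\{(0,0,0)\}$ with value $0$ at $(0,0,0)$; $\underline Q(s,\rho,\sigma)=\sum_{\tilde u,\tilde v}\rho(\tilde u)\sigma(\tilde v)Q(s,\tilde u,\tilde v)$. Given random variables (on a common probability space) $Q_0$, stepsizes $\gamma_{t,\ell}\in[0,1]$, delays $0\le\tau_{\ell\tilde\ell}(t)\le t$, successors $j_t^\ell\in S_o$ ($\ell,\tilde\ell\in R$, $t\ge0$), the Q-learning iterates are $Q_{t+1}(i,u,v)=(1-\gamma_{t,\ell})Q_t(i,u,v)+\gamma_{t,\ell}(\hat g(i,u,v,s)+\inf_{\rho\in\bar U(s)}\sup_{\sigma\in\bar V(s)}\underline Q^{(\ell)}_t(s,\rho,\sigma))$ with $\ell=(i,u,v)$, $s=j_t^\ell$, $Q^{(\ell)}_t(\tilde\ell)=Q_{\tau_{\ell\tilde\ell}(t)}(\tilde\ell)$. The sequence $\{\hat Q_t\}$ uses the same random variables: $\hat Q_0=Q_0$ and $\hat Q_{t+1}(i,u,v)=(1-\gamma_{t,\ell})\hat Q_t(i,u,v)+\gamma_{t,\ell}(\hat g(i,u,v,s)+\inf_{\rho\in\bar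 U(s)}\underline{\hat Q}^{(\ell)}_t(s,\rho,\bar\nu_s))$, where $\hat Q^{(\ell)}_t(\tilde\ell)=\hat Q_{\tau_{\ell\tilde\ell}(t)}(\tilde\ell)$. *)

theory Defs
  imports "HOL-Probability.Probability"
begin

text \<open>States S = {1..n}, termination state 0.
  Controls U i, V i; transition probabilities p i j u v; transition cost g i u v j.\<close>

definition Pi1 :: "nat \<Rightarrow> (nat \<Rightarrow> 'u set) \<Rightarrow> (nat \<Rightarrow> 'u pmf) set" where
  "Pi1 n U = {\<mu>. \<forall>i\<in>{1..n}. set_pmf (\<mu> i) \<subseteq> U i}"

definition Pi2 :: "nat \<Rightarrow> (nat \<Rightarrow> 'v set) \<Rightarrow> (nat \<Rightarrow> 'v pmf) set" where
  "Pi2 n V = {\<nu>. \<forall>i\<in>{1..n}. set_pmf (\<nu> i) \<subseteq> V i}"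

definition chain ::
  "nat \<Rightarrow> (nat \<Rightarrow> 'u set) \<Rightarrow> (nat \<Rightarrow> 'v set) \<Rightarrow> (nat \<Rightarrow> nat \<Rightarrow> 'u \<Rightarrow> 'v \<Rightarrow> real)
    \<Rightarrow> (nat \<Rightarrow> 'u pmf) \<Rightarrow> (nat \<Rightarrow> 'v pmf) \<Rightarrow> nat \<Rightarrow> nat \<Rightarrow> real" where
  "chain n U V p \<mu> \<nu> i j =
     (if i \<in> {1..n} then (\<Sum>u\<in>U i. \<Sum>v\<in>V i. pmf (\<mu> i) u * pmf (\<nu> i) v * p i j u v)
      else if j = 0 then 1 else 0)"

fun mpow :: "nat \<Rightarrow> (nat \<Rightarrow> nat \<Rightarrow> real) \<Rightarrow> nat \<Rightarrow> nat \<Rightarrow> nat \<Rightarrow> real" where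
  "mpow n P 0 i j = (if i = j then 1 else 0)"
| "mpow n P (Suc k) i j = (\<Sum>m\<in>{0..n}. mpow n P k i m * P m j)"

definition stage_cost ::
  "nat \<Rightarrow> (nat \<Rightarrow> 'u set) \<Rightarrow> (nat \<Rightarrow> 'v set) \<Rightarrow> (nat \<Rightarrow> nat \<Rightarrow> 'u \<Rightarrow> 'v \<Rightarrow> real)
    \<Rightarrow> (nat \<Rightarrow> 'u \<Rightarrow> 'v \<Rightarrow> nat \<Rightarrow> real) \<Rightarrow> (nat \<Rightarrow> 'u pmf) \<Rightarrow> (nat \<Rightarrow> 'v pmf) \<Rightarrow> nat \<Rightarrow> real" where
  "stage_cost n U V p g \<mu> \<nu> i =
     (if i \<in> {1..n} then
        (\<Sum>u\<in>U i. \<Sum>v\<in>V i. \<Sum>j\<in>{0..n}. pmf (\<mu> i) u * pmf (\<nu> i) v * p i j u v * g i u v j)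
      else 0)"

text \<open>J(i; mu, nu) = liminf_t E[sum_{k=0}^t g(i_k,u_k,v_k,i_{k+1}) | i_0 = i].\<close>
definition Jcost ::
  "nat \<Rightarrow> (nat \<Rightarrow> 'u set) \<Rightarrow> (nat \<Rightarrow> 'v set) \<Rightarrow> (nat \<Rightarrow> nat \<Rightarrow> 'u \<Rightarrow> 'v \<Rightarrow> real)
    \<Rightarrow> (nat \<Rightarrow> 'u \<Rightarrow> 'v \<Rightarrow> nat \<Rightarrow> real) \<Rightarrow> (nat \<Rightarrow> 'u pmf) \<Rightarrow> (nat \<Rightarrow> 'v pmf) \<Rightarrow> nat \<Rightarrow> ereal" where
  "Jcost n U V p g \<mu> \<nu> i =
     liminf (\<lambda>t. ereal (\<Sum>k\<le>t. \<Sum>j\<in>{0..n}.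
        mpow n (chain n U V p \<mu> \<nu>) k i j * stage_cost n U V p g \<mu> \<nu> j))"

text \<open>Prolonging: for some initial state, termination is never reached with positive
  probability. Since 0 is absorbing, P(reach 0 by time k) = mpow k i 0, nondecreasing in k,
  and P(never reach 0) = 1 - sup_k mpow k i 0.\<close>
definition prolonging ::
  "nat \<Rightarrow> (nat \<Rightarrow> 'u set) \<Rightarrow> (nat \<Rightarrow> 'v set) \<Rightarrow> (nat \<Rightarrow> nat \<Rightarrow> 'u \<Rightarrow> 'v \<Rightarrow> real)
    \<Rightarrow> (nat \<Rightarrow> 'u pmf) \<Rightarrow> (nat \<Rightarrow> 'v pmf) \<Rightarrow> bool" where
  "prolonging n U V p \<mu> \<nu> \<longleftrightarrow>
     (\<exists>i\<in>{1..n}. (SUP k. mpow n (chain n U V p \<mu> \<nu>) k i 0) < 1)"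

definition essentially_proper ::
  "nat \<Rightarrow> (nat \<Rightarrow> 'u set) \<Rightarrow> (nat \<Rightarrow> 'v set) \<Rightarrow> (nat \<Rightarrow> nat \<Rightarrow> 'u \<Rightarrow> 'v \<Rightarrow> real)
    \<Rightarrow> (nat \<Rightarrow> 'u \<Rightarrow> 'v \<Rightarrow> nat \<Rightarrow> real) \<Rightarrow> (nat \<Rightarrow> 'v pmf) \<Rightarrow> bool" where
  "essentially_proper n U V p g \<nu> \<longleftrightarrow>
     \<nu> \<in> Pi2 n V \<and>
     (\<exists>\<mu>\<in>Pi1 n U. \<not> prolonging n U V p \<mu> \<nu>) \<and>
     (\<forall>\<mu>\<in>Pi1 n U. prolonging n U V p \<mu> \<nu> \<longrightarrow>
        (\<exists>i\<in>{1..n}. Jcost n U V p g \<mu> \<nu> i = \<infinity>))"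

definition ssp_game_assumption ::
  "nat \<Rightarrow> (nat \<Rightarrow> 'u set) \<Rightarrow> (nat \<Rightarrow> 'v set) \<Rightarrow> (nat \<Rightarrow> nat \<Rightarrow> 'u \<Rightarrow> 'v \<Rightarrow> real)
    \<Rightarrow> (nat \<Rightarrow> 'u \<Rightarrow> 'v \<Rightarrow> nat \<Rightarrow> real) \<Rightarrow> bool" where
  "ssp_game_assumption n U V p g \<longleftrightarrow>
     (\<exists>\<mu>\<in>Pi1 n U. \<forall>\<nu>\<in>Pi2 n V. \<forall>i\<in>{1..n}. Jcost n U V p g \<mu> \<nu> i < \<infinity>) \<and>
     (\<exists>\<nu>\<in>Pi2 n V. \<forall>\<mu>\<in>Pi1 n U. \<forall>i\<in>{1..n}. Jcost n U V p g \<mu> \<nu> i > -\<infinity>) \<and>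
     (\<forall>\<mu>\<in>Pi1 n U. \<forall>\<nu>\<in>Pi2 n V. prolonging n U V p \<mu> \<nu> \<longrightarrow>
        (\<exists>i\<in>{1..n}. Jcost n U V p g \<mu> \<nu> i \<in> {\<infinity>, -\<infinity>}))"

text \<open>Q-learning. Index set R; the component (0,0,0) of Q-vectors is identically 0,
  so Q-bar(0, rho, sigma) = 0 and the min-max term at the termination state is 0.\<close>
definition Rset :: "nat \<Rightarrow> (nat \<Rightarrow> 'u set) \<Rightarrow> (nat \<Rightarrow> 'v set) \<Rightarrow> (nat \<times> 'u \<times> 'v) set" where
  "Rset n U V = {(i, u, v). i \<in> {1..n} \<and> u \<in> U i \<and> v \<in> V i}"

definition underQ ::
  "(nat \<Rightarrow> 'u set) \<Rightarrow> (nat \<Rightarrow> 'v set) \<Rightarrow> (nat \<times> 'u \<times> 'v \<Rightarrow> real) \<Rightarrow> nat \<Rightarrow> 'u pmf \<Rightarrow> 'v pmf \<Rightarrow> real" where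
  "underQ U V Q s \<rho> \<sigma> = (\<Sum>u\<in>U s. \<Sum>v\<in>V s. pmf \<rho> u * pmf \<sigma> v * Q (s, u, v))"

definition minimax_val ::
  "(nat \<Rightarrow> 'u set) \<Rightarrow> (nat \<Rightarrow> 'v set) \<Rightarrow> (nat \<times> 'u \<times> 'v \<Rightarrow> real) \<Rightarrow> nat \<Rightarrow> real" where
  "minimax_val U V Q s =
     (if s = 0 then 0 else
        (INF \<rho>\<in>{\<rho>. set_pmf \<rho> \<subseteq> U s}. SUP \<sigma>\<in>{\<sigma>. set_pmf \<sigma> \<subseteq> V s}. underQ U V Q s \<rho> \<sigma>))"

definition inf_val ::
  "(nat \<Rightarrow> 'u set) \<Rightarrow> (nat \<Rightarrow> 'v set) \<Rightarrow> (nat \<Rightarrow> 'v pmf) \<Rightarrow> (nat \<times> 'u \<times> 'v \<Rightarrow> real) \<Rightarrow> nat \<Rightarrow> real" where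
  "inf_val U V \<nu> Q s =
     (if s = 0 then 0 else (INF \<rho>\<in>{\<rho>. set_pmf \<rho> \<subseteq> U s}. underQ U V Q s \<rho> (\<nu> s)))"

end

theory Submission
  imports Defs
begin

lemma underQ_upper:
  assumes "finite (U s)" "finite (V s)"
  shows "underQ U V Q s \<rho> \<sigma> \<le> (\<Sum>u\<in>U s. \<Sum>v\<in>V s. \<bar>Q (s,u,v)\<bar>)"
  unfolding underQ_def
proof (intro sum_mono)
  fix u v
  have a: "0 \<le> pmf \<rho> u * pmf \<sigma> v" by simp
  have b: "pmf \<rho> u * pmf \<sigma> v \<le> 1"
    by (simp add: mult_le_one pmf_le_1)
  have "pmf \<rho> u * pmf \<sigma> v * Q (s,u,v) \<le> pmf \<rho> u * pmf \<sigma> v * \<bar>Q (s,u,v)\<bar>"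
    using a by (simp add: mult_left_mono)
  also have "\<dots> \<le> 1 * \<bar>Q (s,u,v)\<bar>" using b by (intro mult_right_mono) auto
  finally show "pmf \<rho> u * pmf \<sigma> v * Q (s,u,v) \<le> \<bar>Q (s,u,v)\<bar>" by simp
qed

lemma underQ_lower:
  assumes "finite (U s)" "finite (V s)"
  shows "- (\<Sum>u\<in>U s. \<Sum>v\<in>V s. \<bar>Q (s,u,v)\<bar>) \<le> underQ U V Q s \<rho> \<sigma>"
proof -
  have "underQ U V (\<lambda>l. - Q l) s \<rho> \<sigma> \<le> (\<Sum>u\<in>U s. \<Sum>v\<in>V s. \<bar>- Q (s,u,v)\<bar>)"
    using underQ_upper[of U s V "\<lambda>l. - Q l"] assms by blast
  moreover have "underQ U V (\<lambda>l. - Q l) s \<rho> \<sigma> = - underQ U V Q s \<rho> \<sigma>"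
    unfolding underQ_def by (simp add: sum_negf)
  ultimately show ?thesis by simp
qed

lemma underQ_mono:
  assumes "\<forall>u\<in>U s. \<forall>v\<in>V s. Q2 (s,u,v) \<le> Q1 (s,u,v)"
  shows "underQ U V Q2 s \<rho> \<sigma> \<le> underQ U V Q1 s \<rho> \<sigma>"
  unfolding underQ_def using assms
  by (intro sum_mono) (simp add: mult_left_mono)

lemma minimax_ge_inf:
  assumes fin: "finite (U s)" "finite (V s)" "U s \<noteq> {}"
    and nu: "set_pmf (\<nu> s) \<subseteq> V s"
    and le: "\<forall>u\<in>U s. \<forall>v\<in>V s. Q2 (s,u,v) \<le> Q1 (s,u,v)"
  shows "inf_val U V \<nu> Q2 s \<le> minimax_val U V Q1 s"
proof (cases "s = 0")
  case True thus ?thesis by (simp add: inf_val_def minimax_val_def)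
next
  case False
  obtain u0 where "u0 \<in> U s" using fin by auto
  hence "return_pmf u0 \<in> {\<rho>. set_pmf \<rho> \<subseteq> U s}" by simp
  hence ne: "{\<rho>. set_pmf \<rho> \<subseteq> U s} \<noteq> {}" by blast
  have bb: "bdd_below ((\<lambda>\<rho>. underQ U V Q2 s \<rho> (\<nu> s)) ` {\<rho>. set_pmf \<rho> \<subseteq> U s})"
    using underQ_lower[of U s V Q2] fin(1,2) by (intro bdd_belowI2) blast
  have "(INF \<rho>\<in>{\<rho>. set_pmf \<rho> \<subseteq> U s}. underQ U V Q2 s \<rho> (\<nu> s))
     \<le> (INF \<rho>\<in>{\<rho>. set_pmf \<rho> \<subseteq> U s}. SUP \<sigma>\<in>{\<sigma>. set_pmf \<sigma> \<subseteq> V s}. underQ U V Q1 s \<rho> \<sigma>)"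
  proof (rule cINF_mono[OF ne bb])
    fix \<rho> assume r: "\<rho> \<in> {\<rho>. set_pmf \<rho> \<subseteq> U s}"
    have ba: "bdd_above ((\<lambda>\<sigma>. underQ U V Q1 s \<rho> \<sigma>) ` {\<sigma>. set_pmf \<sigma> \<subseteq> V s})"
      using underQ_upper[of U s V Q1] fin(1,2) by (intro bdd_aboveI2) blast
    have "underQ U V Q2 s \<rho> (\<nu> s) \<le> underQ U V Q1 s \<rho> (\<nu> s)"
      using underQ_mono[of U s V Q2 Q1] le by blast
    also have "\<dots> \<le> (SUP \<sigma>\<in>{\<sigma>. set_pmf \<sigma> \<subseteq> V s}. underQ U V Q1 s \<rho> \<sigma>)"
      using nu by (intro cSUP_upper[OF _ ba]) auto
    finally show "\<exists>m\<in>{\<rho>. set_pmf \<rho> \<subseteq> U s}. underQ U V Q2 s m (\<nu> s)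
        \<le> (SUP \<sigma>\<in>{\<sigma>. set_pmf \<sigma> \<subseteq> V s}. underQ U V Q1 s \<rho> \<sigma>)" using r by blast
  qed
  thus ?thesis using False by (simp add: inf_val_def minimax_val_def)
qed

theorem lemma4p1:
  fixes n :: nat
    and U :: "nat \<Rightarrow> 'u set" and V :: "nat \<Rightarrow> 'v set"
    and p :: "nat \<Rightarrow> nat \<Rightarrow> 'u \<Rightarrow> 'v \<Rightarrow> real"
    and g :: "nat \<Rightarrow> 'u \<Rightarrow> 'v \<Rightarrow> nat \<Rightarrow> real"
    and \<nu>bar :: "nat \<Rightarrow> 'v pmf"
    and M :: "'w measure"
    and \<gamma> :: "nat \<Rightarrow> nat \<times> 'u \<times> 'v \<Rightarrow> 'w \<Rightarrow> real"
    and \<tau> :: "nat \<times> 'u \<times> 'v \<Rightarrow> nat \<times> 'u \<times> 'v \<Rightarrow> nat \<Rightarrow> 'w \<Rightarrow> nat"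
    and js :: "nat \<Rightarrow> nat \<times> 'u \<times> 'v \<Rightarrow> 'w \<Rightarrow> nat"
    and Q Qh :: "'w \<Rightarrow> nat \<Rightarrow> nat \<times> 'u \<times> 'v \<Rightarrow> real"
  assumes U_fin: "\<forall>i\<in>{1..n}. finite (U i) \<and> U i \<noteq> {}"
    and V_fin: "\<forall>i\<in>{1..n}. finite (V i) \<and> V i \<noteq> {}"
    and p_nonneg: "\<forall>i\<in>{1..n}. \<forall>u\<in>U i. \<forall>v\<in>V i. \<forall>j\<in>{0..n}. 0 \<le> p i j u v"
    and p_sum: "\<forall>i\<in>{1..n}. \<forall>u\<in>U i. \<forall>v\<in>V i. (\<Sum>j\<in>{0..n}. p i j u v) = 1"
    and game: "ssp_game_assumption n U V p g"
    and ess: "essentially_proper n U V p g \<nu>bar"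
    and M_prob: "prob_space M"
    and meas_Q0: "\<forall>l\<in>Rset n U V. (\<lambda>\<omega>. Q \<omega> 0 l) \<in> borel_measurable M"
    and meas_\<gamma>: "\<forall>t. \<forall>l\<in>Rset n U V. \<gamma> t l \<in> borel_measurable M"
    and meas_\<tau>: "\<forall>t. \<forall>l\<in>Rset n U V. \<forall>l'\<in>Rset n U V. \<tau> l l' t \<in> measurable M (count_space UNIV)"
    and meas_js: "\<forall>t. \<forall>l\<in>Rset n U V. js t l \<in> measurable M (count_space UNIV)"
    and \<gamma>_range: "\<forall>\<omega> t. \<forall>l\<in>Rset n U V. 0 \<le> \<gamma> t l \<omega> \<and> \<gamma> t l \<omega> \<le> 1"
    and \<tau>_range: "\<forall>\<omega> t. \<forall>l\<in>Rset n U V. \<forall>l'\<in>Rset n U V. \<tau> l l' t \<omega> \<le> t"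
    and js_range: "\<forall>\<omega> t. \<forall>l\<in>Rset n U V. js t l \<omega> \<in> {0..n}"
    and Q_step: "\<forall>\<omega> t i u v. (i, u, v) \<in> Rset n U V \<longrightarrow>
        Q \<omega> (Suc t) (i, u, v) =
          (1 - \<gamma> t (i, u, v) \<omega>) * Q \<omega> t (i, u, v)
          + \<gamma> t (i, u, v) \<omega> * (g i u v (js t (i, u, v) \<omega>)
              + minimax_val U V (\<lambda>l'. Q \<omega> (\<tau> (i, u, v) l' t \<omega>) l') (js t (i, u, v) \<omega>))"
    and Qh_0: "\<forall>\<omega>. \<forall>l\<in>Rset n U V. Qh \<omega> 0 l = Q \<omega> 0 l"
    and Qh_step: "\<forall>\<omega> t i u v. (i, u, v) \<in> Rset n U V \<longrightarrow>
        Qh \<omega> (Suc t) (i, u, v) =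
          (1 - \<gamma> t (i, u, v) \<omega>) * Qh \<omega> t (i, u, v)
          + \<gamma> t (i, u, v) \<omega> * (g i u v (js t (i, u, v) \<omega>)
              + inf_val U V \<nu>bar (\<lambda>l'. Qh \<omega> (\<tau> (i, u, v) l' t \<omega>) l') (js t (i, u, v) \<omega>))"
    and Qh_bdd: "AE \<omega> in M. \<exists>b. \<forall>t. \<forall>l\<in>Rset n U V. b \<le> Qh \<omega> t l"
  shows "AE \<omega> in M. \<exists>b. \<forall>t. \<forall>l\<in>Rset n U V. b \<le> Q \<omega> t l"
  proof -
  have nuP: "\<nu>bar \<in> Pi2 n V" using ess unfolding essentially_proper_def by blast
  have key: "\<And>\<omega> t. \<forall>l\<in>Rset n U V. Qh \<omega> t l \<le> Q \<omega> t l"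
  proof -
    fix \<omega> t
    show "\<forall>l\<in>Rset n U V. Qh \<omega> t l \<le> Q \<omega> t l"
    proof (induction t rule: less_induct)
      case (less t)
      show ?case
      proof (cases t)
        case 0 thus ?thesis using Qh_0 by simp
      next
        case (Suc t0)
        show ?thesis
        proof
          fix l assume lR: "l \<in> Rset n U V"
          obtain i u v where l: "l = (i,u,v)" by (cases l) auto
          define s where "s = js t0 l \<omega>"
          define a where "a = \<gamma> t0 l \<omega>"
          have s_rng: "s \<in> {0..n}" using js_range lR s_def by blast
          have a_rng: "0 \<le> a" "a \<le> 1" using \<gamma>_range lR a_def by auto
          have IHt0: "Qh \<omega> t0 l \<le> Q \<omega> t0 l" using less.IH[of t0] Suc lR by auto
          have mm: "inf_val U V \<nu>bar (\<lambda>l'. Qh \<omega> (\<tau> l l' t0 \<omega>) l') s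
                \<le> minimax_val U V (\<lambda>l'. Q \<omega> (\<tau> l l' t0 \<omega>) l') s"
          proof (cases "s = 0")
            case True thus ?thesis by (simp add: inf_val_def minimax_val_def)
          next
            case False
            hence s1: "s \<in> {1..n}" using s_rng by auto
            show ?thesis
            proof (rule minimax_ge_inf)
              show "finite (U s)" "U s \<noteq> {}" using U_fin s1 by auto
              show "finite (V s)" using V_fin s1 by auto
              show "set_pmf (\<nu>bar s) \<subseteq> V s" using nuP s1 unfolding Pi2_def by auto
              show "\<forall>u\<in>U s. \<forall>v\<in>V s. Qh \<omega> (\<tau> l (s,u,v) t0 \<omega>) (s,u,v) \<le> Q \<omega> (\<tau> l (s,u,v) t0 \<omega>) (s,u,v)"
              proof (intro ballI)
                fix u' v' assume "u' \<in> U s" "v' \<in> V s"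
                hence R': "(s,u',v') \<in> Rset n U V" using s1 unfolding Rset_def by auto
                hence "\<tau> l (s,u',v') t0 \<omega> \<le> t0" using \<tau>_range lR by blast
                hence "\<tau> l (s,u',v') t0 \<omega> < t" using Suc by simp
                thus "Qh \<omega> (\<tau> l (s,u',v') t0 \<omega>) (s,u',v') \<le> Q \<omega> (\<tau> l (s,u',v') t0 \<omega>) (s,u',v')"
                  using less.IH R' by blast
              qed
            qed
          qed
          have eQ: "Q \<omega> t l = (1 - a) * Q \<omega> t0 l + a * (g i u v s
              + minimax_val U V (\<lambda>l'. Q \<omega> (\<tau> l l' t0 \<omega>) l') s)"
            using Q_step lR Suc unfolding l a_def s_def by auto
          have eQh: "Qh \<omega> t l = (1 - a) * Qh \<omega> t0 l + a * (g i u v s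
              + inf_val U V \<nu>bar (\<lambda>l'. Qh \<omega> (\<tau> l l' t0 \<omega>) l') s)"
            using Qh_step lR Suc unfolding l a_def s_def by auto
          have "(1 - a) * Qh \<omega> t0 l \<le> (1 - a) * Q \<omega> t0 l"
            using a_rng IHt0 by (intro mult_left_mono) auto
          moreover have "a * (g i u v s + inf_val U V \<nu>bar (\<lambda>l'. Qh \<omega> (\<tau> l l' t0 \<omega>) l') s)
              \<le> a * (g i u v s + minimax_val U V (\<lambda>l'. Q \<omega> (\<tau> l l' t0 \<omega>) l') s)"
            using a_rng mm by (intro mult_left_mono) auto
          ultimately show "Qh \<omega> t l \<le> Q \<omega> t l" using eQ eQh by linarith
        qed
      qed
    qed
  qed
  show ?thesis
    using Qh_bdd
  proof (rule eventually_mono)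
    fix \<omega> assume "\<exists>b. \<forall>t. \<forall>l\<in>Rset n U V. b \<le> Qh \<omega> t l"
    then obtain b where "\<forall>t. \<forall>l\<in>Rset n U V. b \<le> Qh \<omega> t l" by blast
    thus "\<exists>b. \<forall>t. \<forall>l\<in>Rset n U V. b \<le> Q \<omega> t l" using key by (meson order_trans)
  qed
qed

end
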